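(* Let $n,m,d_j\in\mathbb{Z}_+$, $j=0,1,\dots,2k$, satisfy $d_0=n$, $d_{2k}=m\ge 2n+1$, and $d_j\ge 2n+1$ for all even $j\ge 2$. Let $$F_k=B_k\circ f^{(k)}_\theta\circ B_{k-1}\circ f^{(k-1)}_\theta\circ\cdots\circ B_1\circ f^{(1)}_\theta,$$ where each $f^{(j)}_\theta:\mathbb{R}^{d_{2j-2}}\to\mathbb{R}^{d_{2j-1}}$ is an injective neural network and $B_j\in\mathbb{R}^{d_{2j}\times d_{2j-1}}$ are random matrices whose joint distribution is absolutely continuous with respect to Lebesgue measure on $\prod_{j=1}^k\mathbb{R}^{d_{2j}\times d_{2j-1}}$. Then $F_k:\mathbb{R}^n\to\mathbb{R}^m$ is injective almost surely.
   Context: Neural networks here are ReLU networks $z\mapsto W_{L+1}\phi_L(W_L\cdots\phi_1(W_1z+b_1)\cdots+b_L)$ with weight matrices $W_\ell$, biases $b_\ell$ and $\phi_\ell=\operatorname{ReLU}$ applied componentwise (arbitrary depth and widths). *)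

theory Defs
  imports "HOL-Probability.Probability"
begin

text \<open>Vectors of R^d are represented as functions nat => real vanishing outside {..<d};
  matrices as functions nat => nat => real (row, column).\<close>

definition vecs :: "nat \<Rightarrow> (nat \<Rightarrow> real) set" where
  "vecs d = {x. \<forall>i\<ge>d. x i = 0}"

definition lin :: "nat \<Rightarrow> nat \<Rightarrow> (nat \<Rightarrow> nat \<Rightarrow> real) \<Rightarrow> (nat \<Rightarrow> real) \<Rightarrow> (nat \<Rightarrow> real)" where
  "lin p q W x = (\<lambda>i. if i < q then (\<Sum>c<p. W i c * x c) else 0)"

definition relu :: "(nat \<Rightarrow> real) \<Rightarrow> (nat \<Rightarrow> real)" where
  "relu x = (\<lambda>i. max 0 (x i))"

fun hidden :: "nat list \<Rightarrow> ((nat \<Rightarrow> nat \<Rightarrow> real) \<times> (nat \<Rightarrow> real)) list \<Rightarrow> (nat \<Rightarrow> real) \<Rightarrow> (nat \<Rightarrow> real)" where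
  "hidden (p # q # ds) ((W, b) # ls) x =
     hidden (q # ds) ls (relu (\<lambda>i. lin p q W x i + (if i < q then b i else 0)))"
| "hidden _ _ x = x"

definition is_relu_net :: "nat \<Rightarrow> nat \<Rightarrow> ((nat \<Rightarrow> real) \<Rightarrow> (nat \<Rightarrow> real)) \<Rightarrow> bool" where
  "is_relu_net p q f \<longleftrightarrow>
     (\<exists>ds ls Wf. ds \<noteq> [] \<and> hd ds = p \<and> length ls + 1 = length ds \<and>
        (\<forall>x\<in>vecs p. f x = lin (last ds) q Wf (hidden ds ls x)))"

text \<open>Index set of the entries of the matrices B_1, ..., B_k, B_j in R^(d_{2j} x d_{2j-1}).\<close>
definition Bidx :: "(nat \<Rightarrow> nat) \<Rightarrow> nat \<Rightarrow> (nat \<times> nat \<times> nat) set" where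
  "Bidx d k = {(j, r, c). 1 \<le> j \<and> j \<le> k \<and> r < d (2*j) \<and> c < d (2*j - 1)}"

text \<open>F_j = B_j o f^(j) o ... o B_1 o f^(1), given all matrix entries Bv.\<close>
fun compF :: "(nat \<Rightarrow> nat) \<Rightarrow> (nat \<Rightarrow> (nat \<Rightarrow> real) \<Rightarrow> (nat \<Rightarrow> real)) \<Rightarrow>
    (nat \<times> nat \<times> nat \<Rightarrow> real) \<Rightarrow> nat \<Rightarrow> (nat \<Rightarrow> real) \<Rightarrow> (nat \<Rightarrow> real)" where
  "compF d f Bv 0 x = x"
| "compF d f Bv (Suc j) x =
     lin (d (2*j + 1)) (d (2*j + 2)) (\<lambda>r c. Bv (Suc j, r, c)) (f (Suc j) (compF d f Bv j x))"

end

theory Submission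
  imports Defs "Jordan_Normal_Form.Determinant" "HOL-Computational_Algebra.Polynomial"
begin

inductive polyfun :: "'i set \<Rightarrow> (('i \<Rightarrow> real) \<Rightarrow> real) \<Rightarrow> bool" for I where
  pf_const: "polyfun I (\<lambda>x. c)"
| pf_var: "i \<in> I \<Longrightarrow> polyfun I (\<lambda>x. x i)"
| pf_add: "polyfun I p \<Longrightarrow> polyfun I q \<Longrightarrow> polyfun I (\<lambda>x. p x + q x)"
| pf_mult: "polyfun I p \<Longrightarrow> polyfun I q \<Longrightarrow> polyfun I (\<lambda>x. p x * q x)"

lemma pf_sum: "(\<And>s. s \<in> S \<Longrightarrow> polyfun I (p s)) \<Longrightarrow> polyfun I (\<lambda>x. \<Sum>s\<in>S. p s x)"
proof (induction S rule: infinite_finite_induct)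
  case (infinite A) then show ?case by (simp add: pf_const)
next
  case empty then show ?case by (simp add: pf_const)
next
  case (insert s F) then show ?case by (simp add: pf_add)
qed

lemma pf_prod: "(\<And>s. s \<in> S \<Longrightarrow> polyfun I (p s)) \<Longrightarrow> polyfun I (\<lambda>x. \<Prod>s\<in>S. p s x)"
proof (induction S rule: infinite_finite_induct)
  case (infinite A) then show ?case by (simp add: pf_const)
next
  case empty then show ?case by (simp add: pf_const)
next
  case (insert s F) then show ?case by (simp add: pf_mult)
qed

lemma pf_neg: "polyfun I p \<Longrightarrow> polyfun I (\<lambda>x. - p x)"
  using pf_mult[OF pf_const[of I "-1"]] by simp

lemma pf_diff: "polyfun I p \<Longrightarrow> polyfun I q \<Longrightarrow> polyfun I (\<lambda>x. p x - q x)"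
  using pf_add[OF _ pf_neg] by simp

lemma pf_mono: "polyfun I p \<Longrightarrow> I \<subseteq> J \<Longrightarrow> polyfun J p"
  by (induction rule: polyfun.induct) (auto intro: polyfun.intros)

lemma pf_agree: "polyfun I p \<Longrightarrow> (\<And>i. i \<in> I \<Longrightarrow> x i = y i) \<Longrightarrow> p x = p y"
  by (induction rule: polyfun.induct) auto

lemma pf_meas: "polyfun I p \<Longrightarrow> p \<in> borel_measurable (PiM I (\<lambda>_. lborel))"
  by (induction rule: polyfun.induct) auto

lemma pf_upoly: "polyfun I p \<Longrightarrow> \<exists>q. \<forall>t. p (x(i:=t)) = poly q t"
proof (induction rule: polyfun.induct)
  case (pf_const c) then show ?case by (intro exI[of _ "[:c:]"]) simp
next
  case (pf_var j) show ?case
  proof (cases "j = i")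
    case True then show ?thesis by (intro exI[of _ "[:0,1:]"]) simp
  next
    case False then show ?thesis by (intro exI[of _ "[:x j:]"]) simp
  qed
next
  case (pf_add p q) then show ?case
    by (metis poly_add)
next
  case (pf_mult p q) then show ?case
    by (metis poly_mult)
qed

lemma pf_subst: "polyfun (insert i J) p \<Longrightarrow> polyfun J (\<lambda>x. p (x(i:=t)))"
proof (induction rule: polyfun.induct)
  case (pf_var j) then show ?case
    by (cases "j = i") (auto intro: polyfun.intros)
qed (auto intro: polyfun.intros)

lemma pf_null:
  assumes "finite I" "polyfun I p" "p x0 \<noteq> 0"
  shows "{x \<in> space (PiM I (\<lambda>_. lborel)). p x = 0} \<in> null_sets (PiM I (\<lambda>_. lborel))"
  using assms
proof (induction I arbitrary: p x0 rule: finite_induct)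
  case empty
  have "p x \<noteq> 0" for x using pf_agree[OF empty(1), of x x0] empty(2) by auto
  then have "{x \<in> space (PiM {} (\<lambda>_. lborel)). p x = 0} = {}" using empty by auto
  then show ?case by (metis null_sets.empty_sets)
next
  case (insert i J)
  interpret product_sigma_finite "\<lambda>_. lborel :: real measure" by standard
  define Z where "Z = {x \<in> space (PiM (insert i J) (\<lambda>_. lborel)). p x = 0}"
  have Zm: "Z \<in> sets (PiM (insert i J) (\<lambda>_. lborel))"
    unfolding Z_def using pf_meas[OF insert(4)] by measurable
  define q where "q = (\<lambda>x. p (x(i := x0 i)))"
  have q: "polyfun J q" unfolding q_def using pf_subst[OF insert(4)] .
  have "q x0 \<noteq> 0" unfolding q_def using insert(5) by simp
  from insert(3)[OF q this]
  have Z': "{x \<in> space (PiM J (\<lambda>_. lborel)). q x = 0} \<in> null_sets (PiM J (\<lambda>_. lborel))" .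
  have "AE x in PiM J (\<lambda>_. lborel). (\<integral>\<^sup>+ y. indicator Z (x(i := y)) \<partial>lborel) = 0"
  proof (rule AE_I'[OF Z'], safe)
    fix x assume x: "x \<in> space (PiM J (\<lambda>_. lborel))"
      and ne: "(\<integral>\<^sup>+ y. indicator Z (x(i := y)) \<partial>lborel) \<noteq> 0"
    show "q x = 0"
    proof (rule ccontr)
      assume qx: "q x \<noteq> 0"
      obtain r where r: "\<And>t. p (x(i:=t)) = poly r t" using pf_upoly[OF insert(4)] by blast
      have "r \<noteq> 0" using qx r[of "x0 i"] unfolding q_def by auto
      then have fin: "finite {t. poly r t = 0}" by (rule poly_roots_finite)
      have "(\<integral>\<^sup>+ y. indicator Z (x(i := y)) \<partial>lborel) \<le> (\<integral>\<^sup>+ y. indicator {t. poly r t = 0} y \<partial>lborel)"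
        by (intro nn_integral_mono) (auto simp: Z_def r split: split_indicator)
      also have "\<dots> = emeasure lborel {t. poly r t = 0}"
        using fin by (intro nn_integral_indicator) (simp add: finite_imp_closed)
      also have "\<dots> = 0" using fin by (simp add: emeasure_lborel_countable countable_finite)
      finally show False using ne by simp
    qed
  qed
  then have "(\<integral>\<^sup>+ x. \<integral>\<^sup>+ y. indicator Z (x(i := y)) \<partial>lborel \<partial>PiM J (\<lambda>_. lborel)) = 0"
    by (subst nn_integral_cong_AE[where v="\<lambda>_. 0"]) auto
  moreover have "emeasure (PiM (insert i J) (\<lambda>_. lborel)) Z = (\<integral>\<^sup>+ x. \<integral>\<^sup>+ y. indicator Z (x(i := y)) \<partial>lborel \<partial>PiM J (\<lambda>_. lborel))"
    using product_nn_integral_insert[OF insert(1,2), of "indicator Z"] Zm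
    by (simp add: nn_integral_indicator)
  ultimately show ?case using Zm unfolding Z_def by auto
qed

definition ppa :: "'i set \<Rightarrow> nat \<Rightarrow> nat \<Rightarrow> (('i\<Rightarrow>real) \<Rightarrow> (nat\<Rightarrow>real) \<Rightarrow> (nat\<Rightarrow>real)) \<Rightarrow> bool" where
"ppa I n q G \<longleftrightarrow> (\<forall>Bv x. x \<in> vecs n \<longrightarrow> G Bv x \<in> vecs q) \<and>
  (\<exists>S. finite S \<and> (\<forall>(A,b)\<in>S. (\<forall>i c. polyfun I (\<lambda>Bv. A Bv i c)) \<and> (\<forall>i. polyfun I (\<lambda>Bv. b Bv i))) \<and>
     (\<forall>Bv x. x \<in> vecs n \<longrightarrow> (\<exists>(A,b)\<in>S. G Bv x = (\<lambda>i. (\<Sum>c<n. A Bv i c * x c) + b Bv i))))"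

lemma ppa_mono: "ppa I n q G \<Longrightarrow> I \<subseteq> J \<Longrightarrow> ppa J n q G"
proof -
  assume G: "ppa I n q G" and IJ: "I \<subseteq> J"
  from G obtain S where S: "finite S"
    "\<forall>(A,b)\<in>S. (\<forall>i c. polyfun I (\<lambda>Bv. A Bv i c)) \<and> (\<forall>i. polyfun I (\<lambda>Bv. b Bv i))"
    "\<forall>Bv x. x \<in> vecs n \<longrightarrow> (\<exists>(A,b)\<in>S. G Bv x = (\<lambda>i. (\<Sum>c<n. A Bv i c * x c) + b Bv i))"
    and V: "\<forall>Bv x. x \<in> vecs n \<longrightarrow> G Bv x \<in> vecs q"
    unfolding ppa_def by blast
  have "\<forall>(A,b)\<in>S. (\<forall>i c. polyfun J (\<lambda>Bv. A Bv i c)) \<and> (\<forall>i. polyfun J (\<lambda>Bv. b Bv i))"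
    using S(2) pf_mono[OF _ IJ] by fast
  then show ?thesis unfolding ppa_def using S(1,3) V by blast
qed

lemma ppa_cong: "ppa I n q G \<Longrightarrow> (\<And>Bv x. x \<in> vecs n \<Longrightarrow> G' Bv x = G Bv x) \<Longrightarrow> ppa I n q G'"
proof -
  assume G: "ppa I n q G" and eq: "\<And>Bv x. x \<in> vecs n \<Longrightarrow> G' Bv x = G Bv x"
  from G obtain S where S: "finite S"
    "\<forall>(A,b)\<in>S. (\<forall>i c. polyfun I (\<lambda>Bv. A Bv i c)) \<and> (\<forall>i. polyfun I (\<lambda>Bv. b Bv i))"
    "\<forall>Bv x. x \<in> vecs n \<longrightarrow> (\<exists>(A,b)\<in>S. G Bv x = (\<lambda>i. (\<Sum>c<n. A Bv i c * x c) + b Bv i))"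
    and V: "\<forall>Bv x. x \<in> vecs n \<longrightarrow> G Bv x \<in> vecs q"
    unfolding ppa_def by blast
  have "\<forall>Bv x. x \<in> vecs n \<longrightarrow> (\<exists>(A,b)\<in>S. G' Bv x = (\<lambda>i. (\<Sum>c<n. A Bv i c * x c) + b Bv i))"
    using S(3) eq by simp
  moreover have "\<forall>Bv x. x \<in> vecs n \<longrightarrow> G' Bv x \<in> vecs q" using V eq by simp
  ultimately show ?thesis unfolding ppa_def using S(1,2) by blast
qed

lemma ppa_id: "ppa I n n (\<lambda>Bv x. x)"
  unfolding ppa_def
proof (intro conjI exI[of _ "{(\<lambda>Bv i c. if i = c then 1 else 0, \<lambda>Bv i. 0)}"] allI impI)
  fix Bv and x :: "nat \<Rightarrow> real" assume x: "x \<in> vecs n"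
  have "x = (\<lambda>i. (\<Sum>c<n. (if i = c then 1 else 0) * x c) + 0)"
  proof
    fix i show "x i = (\<Sum>c<n. (if i = c then 1 else 0) * x c) + 0"
    proof -
      have "(\<Sum>c<n. (if i = c then 1 else 0) * x c) = (if i < n then x i else 0)"
        by (induct n) (auto simp: less_Suc_eq)
      then show ?thesis using x by (auto simp: vecs_def)
    qed
  qed
  then show "\<exists>(A, b)\<in>{(\<lambda>Bv i c. if i = c then 1 else 0, \<lambda>Bv i. 0)}. x = (\<lambda>i. (\<Sum>c<n. A Bv i c * x c) + b Bv i)"
    by simp
qed (auto intro: pf_const)

lemma ppa_lin:
  assumes G: "ppa I n p G"
    and W: "\<And>r c. r < q \<Longrightarrow> c < p \<Longrightarrow> polyfun I (\<lambda>Bv. W Bv r c)"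
    and be: "\<And>r. r < q \<Longrightarrow> polyfun I (\<lambda>Bv. be Bv r)"
  shows "ppa I n q (\<lambda>Bv x. (\<lambda>i. lin p q (W Bv) (G Bv x) i + (if i < q then be Bv i else 0)))"
proof -
  from G obtain S where S: "finite S"
    "\<forall>(A,b)\<in>S. (\<forall>i c. polyfun I (\<lambda>Bv. A Bv i c)) \<and> (\<forall>i. polyfun I (\<lambda>Bv. b Bv i))"
    "\<forall>Bv x. x \<in> vecs n \<longrightarrow> (\<exists>(A,b)\<in>S. G Bv x = (\<lambda>i. (\<Sum>c<n. A Bv i c * x c) + b Bv i))"
    unfolding ppa_def by blast
  define T where "T = (\<lambda>(A,b). (\<lambda>Bv i c. if i < q then (\<Sum>c'<p. W Bv i c' * A Bv c' c) else 0,
      \<lambda>Bv i. if i < q then (\<Sum>c'<p. W Bv i c' * b Bv c') + be Bv i else 0)) ` S"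
  have "finite T" unfolding T_def using S(1) by simp
  moreover have "\<forall>(A,b)\<in>T. (\<forall>i c. polyfun I (\<lambda>Bv. A Bv i c)) \<and> (\<forall>i. polyfun I (\<lambda>Bv. b Bv i))"
  proof (clarsimp simp: T_def, intro conjI allI)
    fix A b i c assume "(A, b) \<in> S"
    then have A: "\<And>i c. polyfun I (\<lambda>Bv. A Bv i c)" and b: "\<And>i. polyfun I (\<lambda>Bv. b Bv i)" using S(2) by auto
    show "polyfun I (\<lambda>Bv. if i < q then \<Sum>c'<p. W Bv i c' * A Bv c' c else 0)"
      by (cases "i < q") (auto intro!: pf_sum pf_mult W A intro: pf_const)
    show "polyfun I (\<lambda>Bv. if i < q then (\<Sum>c'<p. W Bv i c' * b Bv c') + be Bv i else 0)"
      by (cases "i < q") (auto intro!: pf_add pf_sum pf_mult W b be intro: pf_const)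
  qed
  moreover have "\<forall>Bv x. x \<in> vecs n \<longrightarrow> (\<exists>(A,b)\<in>T. (\<lambda>i. lin p q (W Bv) (G Bv x) i + (if i < q then be Bv i else 0)) = (\<lambda>i. (\<Sum>c<n. A Bv i c * x c) + b Bv i))"
  proof (intro allI impI)
    fix Bv x assume x: "x \<in> vecs n"
    then obtain A b where Ab: "(A,b) \<in> S" "G Bv x = (\<lambda>i. (\<Sum>c<n. A Bv i c * x c) + b Bv i)" using S(3) by blast
    have "(\<lambda>i. lin p q (W Bv) (G Bv x) i + (if i < q then be Bv i else 0)) =
      (\<lambda>i. (\<Sum>c<n. (if i < q then (\<Sum>c'<p. W Bv i c' * A Bv c' c) else 0) * x c) +
         (if i < q then (\<Sum>c'<p. W Bv i c' * b Bv c') + be Bv i else 0))"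
    proof
      fix i show "lin p q (W Bv) (G Bv x) i + (if i < q then be Bv i else 0) =
        (\<Sum>c<n. (if i < q then (\<Sum>c'<p. W Bv i c' * A Bv c' c) else 0) * x c) +
         (if i < q then (\<Sum>c'<p. W Bv i c' * b Bv c') + be Bv i else 0)"
      proof (cases "i < q")
        case True
        have "lin p q (W Bv) (G Bv x) i = (\<Sum>c'<p. W Bv i c' * ((\<Sum>c<n. A Bv c' c * x c) + b Bv c'))"
          using True by (simp add: lin_def Ab(2))
        also have "\<dots> = (\<Sum>c'<p. (\<Sum>c<n. W Bv i c' * A Bv c' c * x c) + W Bv i c' * b Bv c')"
          by (simp add: distrib_left sum_distrib_left mult.assoc)
        also have "\<dots> = (\<Sum>c'<p. \<Sum>c<n. W Bv i c' * A Bv c' c * x c) + (\<Sum>c'<p. W Bv i c' * b Bv c')"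
          by (rule sum.distrib)
        also have "(\<Sum>c'<p. \<Sum>c<n. W Bv i c' * A Bv c' c * x c) = (\<Sum>c<n. \<Sum>c'<p. W Bv i c' * A Bv c' c * x c)"
          by (rule sum.swap)
        also have "\<dots> = (\<Sum>c<n. (\<Sum>c'<p. W Bv i c' * A Bv c' c) * x c)"
          by (simp add: sum_distrib_right)
        finally show ?thesis using True by simp
      qed (simp add: lin_def)
    qed
    then show "\<exists>(A,b)\<in>T. (\<lambda>i. lin p q (W Bv) (G Bv x) i + (if i < q then be Bv i else 0)) = (\<lambda>i. (\<Sum>c<n. A Bv i c * x c) + b Bv i)"
      using Ab(1) unfolding T_def by (intro bexI[of _ "(\<lambda>Bv i c. if i < q then (\<Sum>c'<p. W Bv i c' * A Bv c' c) else 0,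
      \<lambda>Bv i. if i < q then (\<Sum>c'<p. W Bv i c' * b Bv c') + be Bv i else 0)"]) auto
  qed
  moreover have "\<forall>Bv x. x \<in> vecs n \<longrightarrow> (\<lambda>i. lin p q (W Bv) (G Bv x) i + (if i < q then be Bv i else 0)) \<in> vecs q"
    by (auto simp: vecs_def lin_def)
  ultimately show ?thesis unfolding ppa_def by blast
qed

lemma ppa_relu:
  assumes G: "ppa I n q G"
  shows "ppa I n q (\<lambda>Bv x. relu (G Bv x))"
proof -
  from G obtain S where S: "finite S"
    "\<forall>(A,b)\<in>S. (\<forall>i c. polyfun I (\<lambda>Bv. A Bv i c)) \<and> (\<forall>i. polyfun I (\<lambda>Bv. b Bv i))"
    "\<forall>Bv x. x \<in> vecs n \<longrightarrow> (\<exists>(A,b)\<in>S. G Bv x = (\<lambda>i. (\<Sum>c<n. A Bv i c * x c) + b Bv i))"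
    and V: "\<forall>Bv x. x \<in> vecs n \<longrightarrow> G Bv x \<in> vecs q"
    unfolding ppa_def by blast
  define T where "T = (\<lambda>(U,(A,b)). (\<lambda>Bv i c. if i \<in> U then A Bv i c else 0,
      \<lambda>Bv i. if i \<in> U then b Bv i else 0)) ` (Pow {..<q} \<times> S)"
  have "finite T" unfolding T_def using S(1) by simp
  moreover have "\<forall>(A,b)\<in>T. (\<forall>i c. polyfun I (\<lambda>Bv. A Bv i c)) \<and> (\<forall>i. polyfun I (\<lambda>Bv. b Bv i))"
  proof (clarsimp simp: T_def, intro conjI allI)
    fix A b i c U assume "(A, b) \<in> S"
    then have A: "\<And>i c. polyfun I (\<lambda>Bv. A Bv i c)" and b: "\<And>i. polyfun I (\<lambda>Bv. b Bv i)" using S(2) by auto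
    show "polyfun I (\<lambda>Bv. if i \<in> U then A Bv i c else 0)"
      by (cases "i \<in> U") (auto intro!: A intro: pf_const)
    show "polyfun I (\<lambda>Bv. if i \<in> U then b Bv i else 0)"
      by (cases "i \<in> U") (auto intro!: b intro: pf_const)
  qed
  moreover have "\<forall>Bv x. x \<in> vecs n \<longrightarrow> (\<exists>(A,b)\<in>T. relu (G Bv x) = (\<lambda>i. (\<Sum>c<n. A Bv i c * x c) + b Bv i))"
  proof (intro allI impI)
    fix Bv x assume x: "x \<in> vecs n"
    then obtain A b where Ab: "(A,b) \<in> S" "G Bv x = (\<lambda>i. (\<Sum>c<n. A Bv i c * x c) + b Bv i)" using S(3) by blast
    define U where "U = {i. i < q \<and> G Bv x i > 0}"
    have GV: "G Bv x \<in> vecs q" using V x by blast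
    have "relu (G Bv x) = (\<lambda>i. (\<Sum>c<n. (if i \<in> U then A Bv i c else 0) * x c) + (if i \<in> U then b Bv i else 0))"
    proof
      fix i show "relu (G Bv x) i = (\<Sum>c<n. (if i \<in> U then A Bv i c else 0) * x c) + (if i \<in> U then b Bv i else 0)"
      proof (cases "i \<in> U")
        case True then show ?thesis by (simp add: relu_def U_def Ab(2))
      next
        case False
        have "G Bv x i \<le> 0" using False GV unfolding U_def vecs_def by (cases "i < q") auto
        then show ?thesis using False by (simp add: relu_def)
      qed
    qed
    moreover have "U \<in> Pow {..<q}" unfolding U_def by auto
    ultimately show "\<exists>(A,b)\<in>T. relu (G Bv x) = (\<lambda>i. (\<Sum>c<n. A Bv i c * x c) + b Bv i)"
      using Ab(1) unfolding T_def by (intro bexI[of _ "(\<lambda>Bv i c. if i \<in> U then A Bv i c else 0,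
      \<lambda>Bv i. if i \<in> U then b Bv i else 0)"] rev_image_eqI[of "(U,A,b)"]) auto
  qed
  moreover have "\<forall>Bv x. x \<in> vecs n \<longrightarrow> relu (G Bv x) \<in> vecs q"
    using V by (auto simp: vecs_def relu_def)
  ultimately show ?thesis unfolding ppa_def by blast
qed

lemma ppa_hidden:
  "ppa I n (hd ds) G \<Longrightarrow> length ls + 1 = length ds \<Longrightarrow> ppa I n (last ds) (\<lambda>Bv x. hidden ds ls (G Bv x))"
proof (induction ls arbitrary: ds G)
  case Nil
  then obtain p where "ds = [p]" by (cases ds) auto
  then show ?case using Nil by simp
next
  case (Cons l ls)
  obtain W b where l: "l = (W, b)" by (cases l)
  obtain p ds1 where ds1: "ds = p # ds1" using Cons(3) by (cases ds) auto
  obtain q ds' where ds': "ds1 = q # ds'" using Cons(3) ds1 by (cases ds1) auto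
  have ds: "ds = p # q # ds'" using ds1 ds' by simp
  let ?G = "\<lambda>Bv x. relu (\<lambda>i. lin p q W (G Bv x) i + (if i < q then b i else 0))"
  have Gp: "ppa I n p G" using Cons(2) ds by simp
  have "ppa I n q (\<lambda>Bv x. (\<lambda>i. lin p q W (G Bv x) i + (if i < q then b i else 0)))"
    by (rule ppa_lin[where W="\<lambda>_. W" and be="\<lambda>_. b", OF Gp]) (rule pf_const)+
  then have "ppa I n q ?G" by (rule ppa_relu)
  moreover have "length ls + 1 = length (q # ds')" using Cons(3) ds by simp
  ultimately have "ppa I n (last (q # ds')) (\<lambda>Bv x. hidden (q # ds') ls (?G Bv x))"
    using Cons(1)[of "q # ds'" ?G] by simp
  moreover have "(\<lambda>Bv x. hidden ds (l # ls) (G Bv x)) = (\<lambda>Bv x. hidden (q # ds') ls (?G Bv x))"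
    unfolding ds l by simp
  moreover have "last ds = last (q # ds')" unfolding ds by simp
  ultimately show ?case by simp
qed

lemma ppa_net:
  assumes "is_relu_net p q f" "ppa I n p G"
  shows "ppa I n q (\<lambda>Bv x. f (G Bv x))"
proof -
  obtain ds ls Wf where net: "ds \<noteq> []" "hd ds = p" "length ls + 1 = length ds"
    "\<forall>x\<in>vecs p. f x = lin (last ds) q Wf (hidden ds ls x)"
    using assms(1) unfolding is_relu_net_def by blast
  have "ppa I n (last ds) (\<lambda>Bv x. hidden ds ls (G Bv x))"
    using ppa_hidden[of I n ds G ls] assms(2) net by simp
  then have "ppa I n q (\<lambda>Bv x. (\<lambda>i. lin (last ds) q Wf (hidden ds ls (G Bv x)) i + (if i < q then 0 else 0)))"
    by (intro ppa_lin[where W="\<lambda>_. Wf" and be="\<lambda>_ _. 0"]) (auto intro: pf_const)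
  then show ?thesis
  proof (rule ppa_cong)
    fix Bv x assume "x \<in> vecs n"
    then have "G Bv x \<in> vecs p" using assms(2) unfolding ppa_def by blast
    then show "f (G Bv x) = (\<lambda>i. lin (last ds) q Wf (hidden ds ls (G Bv x)) i + (if i < q then 0 else 0))"
      using net(4) by simp
  qed
qed

definition gram :: "nat \<Rightarrow> (nat \<Rightarrow> nat \<Rightarrow> real) \<Rightarrow> nat list \<Rightarrow> real mat" where
  "gram p L C = Matrix.mat (length C) (length C) (\<lambda>(a,b). \<Sum>c<p. L c (C!a) * L c (C!b))"

definition IND :: "nat \<Rightarrow> (nat \<Rightarrow> nat \<Rightarrow> real) \<Rightarrow> nat list \<Rightarrow> bool" where
  "IND p L C \<longleftrightarrow> (\<forall>u. (\<forall>c<p. (\<Sum>b<length C. L c (C!b) * u b) = 0) \<longrightarrow> (\<forall>b<length C. u b = 0))"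

lemma det_zero_if_kernel:
  fixes u :: "nat \<Rightarrow> real"
  assumes "\<forall>a<r. (\<Sum>b<r. E a b * u b) = 0" "b0 < r" "u b0 \<noteq> 0"
  shows "Determinant.det (Matrix.mat r r (\<lambda>(a,b). E a b)) = 0"
proof -
  have M: "Matrix.mat r r (\<lambda>(a,b). E a b) \<in> carrier_mat r r" by simp
  have "vec r u \<in> carrier_vec r" by simp
  moreover have "vec r u \<noteq> 0\<^sub>v r"
  proof
    assume "vec r u = 0\<^sub>v r"
    then have "vec r u $ b0 = 0\<^sub>v r $ b0" by simp
    then show False using assms(2,3) by simp
  qed
  moreover have "Matrix.mat r r (\<lambda>(a,b). E a b) *\<^sub>v vec r u = 0\<^sub>v r"
  proof (rule eq_vecI)
    fix a assume "a < dim_vec (0\<^sub>v r :: real vec)"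
    then have a: "a < r" by simp
    have "(Matrix.mat r r (\<lambda>(a,b). E a b) *\<^sub>v vec r u) $ a = (\<Sum>b<r. E a b * u b)"
      using a by (simp add: scalar_prod_def atLeast0LessThan)
    then show "(Matrix.mat r r (\<lambda>(a,b). E a b) *\<^sub>v vec r u) $ a = 0\<^sub>v r $ a" using assms(1) a by simp
  qed simp
  ultimately show ?thesis using det_0_iff_vec_prod_zero_field[OF M] by blast
qed

lemma gram_det_nz:
  assumes "IND p L C"
  shows "Determinant.det (gram p L C) \<noteq> 0"
proof
  let ?r = "length C"
  assume "Determinant.det (gram p L C) = 0"
  then obtain v where v: "v \<in> carrier_vec ?r" "v \<noteq> 0\<^sub>v ?r" "gram p L C *\<^sub>v v = 0\<^sub>v ?r"
    using det_0_iff_vec_prod_zero_field[of "gram p L C" ?r] by (auto simp: gram_def)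
  define u where "u = (\<lambda>b. v $ b)"
  have Mu: "(\<Sum>b<?r. (\<Sum>c<p. L c (C!a) * L c (C!b)) * u b) = 0" if "a < ?r" for a
  proof -
    have "(gram p L C *\<^sub>v v) $ a = 0" using v(3) that by simp
    then show ?thesis using that v(1) by (simp add: gram_def scalar_prod_def atLeast0LessThan u_def)
  qed
  have "(\<Sum>c<p. (\<Sum>a<?r. L c (C!a) * u a)\<^sup>2) = (\<Sum>a<?r. u a * (\<Sum>b<?r. (\<Sum>c<p. L c (C!a) * L c (C!b)) * u b))"
    by (simp add: power2_eq_square sum_distrib_left sum_distrib_right sum.swap[of _ "{..<p}"] mult_ac)
  also have "\<dots> = 0" using Mu by simp
  finally have "\<forall>c\<in>{..<p}. (\<Sum>a<?r. L c (C!a) * u a)\<^sup>2 = 0"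
    by (subst sum_nonneg_eq_0_iff[symmetric]) auto
  then have "\<forall>c<p. (\<Sum>a<?r. L c (C!a) * u a) = 0" by simp
  then have "\<forall>b<?r. u b = 0" using assms unfolding IND_def by blast
  then have "v = 0\<^sub>v ?r" using v(1) unfolding u_def by (intro eq_vecI) auto
  then show False using v(2) by simp
qed

lemma sum_delta_mult: "i < (r::nat) \<Longrightarrow> (\<Sum>b<r. (if b = i then 1 else 0) * f b) = (f i :: real)"
proof -
  assume i: "i < r"
  have "(\<Sum>b<r. (if b = i then 1 else 0) * f b) = (\<Sum>b\<in>{..<r}. if b = i then f b else 0)"
    by (rule sum.cong) auto
  also have "\<dots> = f i" using i by simp
  finally show ?thesis .
qed

lemma core:
  fixes L B :: "nat \<Rightarrow> nat \<Rightarrow> real" and w :: "nat \<Rightarrow> real"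
  assumes sq: "s \<le> q" and nz: "c0 < p" "(\<Sum>b<s. L c0 b * w b) \<noteq> 0"
    and ker: "\<forall>a<q. (\<Sum>c<p. B a c * (\<Sum>b<s. L c b * w b)) = 0"
  shows "\<exists>C. distinct C \<and> set C \<subseteq> {..<s} \<and> IND p L C \<and>
     Determinant.det (Matrix.mat (length C) (length C) (\<lambda>(a,b). \<Sum>c<p. B a c * L c (C!b))) = 0"
proof -
  define P where "P = (\<lambda>C. distinct C \<and> set C \<subseteq> {..<s} \<and> IND p L C)"
  have P0: "P []" unfolding P_def IND_def by simp
  have Pb: "\<forall>C. P C \<longrightarrow> length C < s + 1"
  proof (intro allI impI)
    fix C assume "P C"
    then have "length C = card (set C)" "set C \<subseteq> {..<s}"
      unfolding P_def by (auto simp: distinct_card)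
    then have "length C \<le> card {..<s}" using card_mono[of "{..<s}" "set C"] by simp
    then show "length C < s + 1" by simp
  qed
  obtain C where C: "P C" and Cmax: "\<And>C'. P C' \<Longrightarrow> length C' \<le> length C"
    using ex_has_greatest_nat[of P "[]" length "s+1"] P0 Pb by blast
  define r where "r = length C"
  have "length C < s + 1" using Pb C by blast
  then have rs: "r \<le> s" unfolding r_def by simp
  have IC: "IND p L C" using C unfolding P_def by simp
  have span: "\<exists>cf. \<forall>c<p. L c b' = (\<Sum>b<r. cf b * L c (C!b))" if b': "b' < s" for b'
  proof (cases "b' \<in> set C")
    case True
    then obtain i where i: "i < r" "C!i = b'" unfolding r_def by (auto simp: in_set_conv_nth)
    show ?thesis
      by (rule exI[of _ "\<lambda>b. if b = i then 1 else 0"]) (use i in \<open>simp add: sum_delta_mult\<close>)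
  next
    case False
    have "\<not> P (C @ [b'])" using Cmax[of "C @ [b']"] by auto
    moreover have "distinct (C @ [b'])" "set (C @ [b']) \<subseteq> {..<s}" using C False b' unfolding P_def by auto
    ultimately have "\<not> IND p L (C @ [b'])" unfolding P_def by blast
    then obtain u bb where u: "\<forall>c<p. (\<Sum>b<Suc r. L c ((C @ [b'])!b) * u b) = 0" and bb: "bb < Suc r" "u bb \<noteq> 0"
      unfolding IND_def r_def by auto
    have split: "(\<Sum>b<Suc r. L c ((C @ [b'])!b) * u b) = (\<Sum>b<r. L c (C!b) * u b) + L c b' * u r" for c
    proof -
      have "(\<Sum>b<r. L c ((C @ [b'])!b) * u b) = (\<Sum>b<r. L c (C!b) * u b)"
        by (rule sum.cong) (auto simp: nth_append r_def)
      then show ?thesis by (simp add: r_def)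
    qed
    have ur: "u r \<noteq> 0"
    proof
      assume "u r = 0"
      then have "\<forall>c<p. (\<Sum>b<length C. L c (C!b) * u b) = 0" using u split unfolding r_def by simp
      then have "\<forall>b<r. u b = 0" using IC unfolding IND_def r_def by blast
      then show False using bb \<open>u r = 0\<close> by (metis less_Suc_eq)
    qed
    show ?thesis
    proof (rule exI[of _ "\<lambda>b. - u b / u r"], intro allI impI)
      fix c assume "c < p"
      then have "(\<Sum>b<r. L c (C!b) * u b) + L c b' * u r = 0" using u split by simp
      then have "L c b' = - (\<Sum>b<r. L c (C!b) * u b) / u r" using ur by (simp add: field_simps)
      also have "\<dots> = (\<Sum>b<r. - u b / u r * L c (C!b))"
        by (simp add: sum_divide_distrib sum_negf[symmetric] mult_ac)
      finally show "L c b' = (\<Sum>b<r. - u b / u r * L c (C!b))" .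
    qed
  qed
  then have "\<forall>b'\<in>{..<s}. \<exists>cf. \<forall>c<p. L c b' = (\<Sum>b<r. cf b * L c (C!b))" by blast
  then obtain cf where cf: "\<And>b' c. b' < s \<Longrightarrow> c < p \<Longrightarrow> L c b' = (\<Sum>b<r. cf b' b * L c (C!b))"
    by (metis bchoice lessThan_iff)
  define u where "u = (\<lambda>b. \<Sum>b'<s. w b' * cf b' b)"
  have Lw: "(\<Sum>b'<s. L c b' * w b') = (\<Sum>b<r. L c (C!b) * u b)" if c: "c < p" for c
  proof -
    have "(\<Sum>b'<s. L c b' * w b') = (\<Sum>b'<s. (\<Sum>b<r. cf b' b * L c (C!b)) * w b')"
      using cf c by (intro sum.cong) auto
    also have "\<dots> = (\<Sum>b'<s. \<Sum>b<r. cf b' b * L c (C!b) * w b')"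
      by (simp add: sum_distrib_right)
    also have "\<dots> = (\<Sum>b<r. \<Sum>b'<s. cf b' b * L c (C!b) * w b')"
      by (rule sum.swap)
    also have "\<dots> = (\<Sum>b<r. L c (C!b) * u b)"
      unfolding u_def by (simp add: sum_distrib_left mult_ac)
    finally show ?thesis .
  qed
  obtain b0 where b0: "b0 < r" "u b0 \<noteq> 0"
  proof (rule ccontr)
    assume "\<not> thesis"
    then have "\<forall>b<r. u b = 0" using that by blast
    then have "(\<Sum>b<r. L c0 (C!b) * u b) = 0" by simp
    then show False using Lw[OF nz(1)] nz(2) by simp
  qed
  have kerC: "\<forall>a<r. (\<Sum>b<r. (\<Sum>c<p. B a c * L c (C!b)) * u b) = 0"
  proof (intro allI impI)
    fix a assume a: "a < r"
    have "(\<Sum>b<r. (\<Sum>c<p. B a c * L c (C!b)) * u b) = (\<Sum>c<p. B a c * (\<Sum>b<r. L c (C!b) * u b))"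
      by (simp add: sum_distrib_left sum_distrib_right mult_ac sum.swap[of _ "{..<r}"])
    also have "\<dots> = (\<Sum>c<p. B a c * (\<Sum>b<s. L c b * w b))"
      using Lw by (intro sum.cong) (auto simp: mult_ac)
    also have "\<dots> = 0" using ker a rs sq by auto
    finally show "(\<Sum>b<r. (\<Sum>c<p. B a c * L c (C!b)) * u b) = 0" .
  qed
  have "Determinant.det (Matrix.mat r r (\<lambda>(a,b). \<Sum>c<p. B a c * L c (C!b))) = 0"
    using det_zero_if_kernel[OF kerC b0] .
  then show ?thesis using C unfolding P_def r_def by blast
qed

lemma pf_det:
  assumes "\<And>a b. a < r \<Longrightarrow> b < r \<Longrightarrow> polyfun I (\<lambda>Bv. E Bv a b)"
  shows "polyfun I (\<lambda>Bv. Determinant.det (Matrix.mat r r (\<lambda>(a,b). E Bv a b)))"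
proof -
  have eq: "Determinant.det (Matrix.mat r r (\<lambda>(a,b). E Bv a b)) =
    (\<Sum>\<pi>\<in>{\<pi>. \<pi> permutes {0..<r}}. signof \<pi> * (\<Prod>i\<in>{0..<r}. E Bv i (\<pi> i)))" for Bv
  proof -
    have "Determinant.det (Matrix.mat r r (\<lambda>(a,b). E Bv a b)) =
      (\<Sum>\<pi>\<in>{\<pi>. \<pi> permutes {0..<r}}. signof \<pi> * (\<Prod>i\<in>{0..<r}. Matrix.mat r r (\<lambda>(a,b). E Bv a b) $$ (i, \<pi> i)))"
      by (rule det_def') simp
    also have "\<dots> = (\<Sum>\<pi>\<in>{\<pi>. \<pi> permutes {0..<r}}. signof \<pi> * (\<Prod>i\<in>{0..<r}. E Bv i (\<pi> i)))"
    proof (rule sum.cong[OF refl])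
      fix \<pi> assume "\<pi> \<in> {\<pi>. \<pi> permutes {0..<r}}"
      then have "\<pi> i < r" if "i < r" for i using that permutes_in_image[of \<pi> "{0..<r}" i] by auto
      then show "signof \<pi> * (\<Prod>i\<in>{0..<r}. Matrix.mat r r (\<lambda>(a,b). E Bv a b) $$ (i, \<pi> i)) =
          signof \<pi> * (\<Prod>i\<in>{0..<r}. E Bv i (\<pi> i))"
        by (intro arg_cong[where f="\<lambda>x. signof \<pi> * x"] prod.cong) auto
    qed
    finally show ?thesis .
  qed
  show ?thesis unfolding eq
  proof (intro pf_sum pf_mult pf_const pf_prod)
    fix \<pi> i assume "\<pi> \<in> {\<pi>. \<pi> permutes {0..<r}}" "i \<in> {0..<r}"
    then show "polyfun I (\<lambda>Bv. E Bv i (\<pi> i))"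
      using assms permutes_in_image[of \<pi> "{0..<r}" i] by auto
  qed
qed

lemma pf_gram:
  assumes "\<And>c b. polyfun I (\<lambda>Bv. L Bv c b)"
  shows "polyfun I (\<lambda>Bv. Determinant.det (gram p (L Bv) C))"
  unfolding gram_def
  by (rule pf_det) (intro pf_sum pf_mult assms)

lemma first_fail: "Q 0 \<Longrightarrow> \<not> Q k \<Longrightarrow> \<exists>j<k. Q j \<and> \<not> Q (Suc j)"
  by (induction k) (auto simp: less_Suc_eq)

lemma sum_split_add: "(\<Sum>b<n+m. g b) = (\<Sum>b<n. g b) + (\<Sum>b<m. g (n + b)) "
  for g :: "nat \<Rightarrow> real"
  by (induction m) (auto simp: add.assoc)

definition LL :: "nat \<Rightarrow> (('i\<Rightarrow>real) \<Rightarrow> nat \<Rightarrow> nat \<Rightarrow> real) \<times> (('i\<Rightarrow>real) \<Rightarrow> nat \<Rightarrow> real) \<Rightarrow>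
   (('i\<Rightarrow>real) \<Rightarrow> nat \<Rightarrow> nat \<Rightarrow> real) \<times> (('i\<Rightarrow>real) \<Rightarrow> nat \<Rightarrow> real) \<Rightarrow> ('i\<Rightarrow>real) \<Rightarrow> nat \<Rightarrow> nat \<Rightarrow> real" where
  "LL n \<sigma> \<tau> Bv c b = (if b < n then fst \<sigma> Bv c b else if b < 2*n then - fst \<tau> Bv c (b-n) else snd \<sigma> Bv c - snd \<tau> Bv c)"

lemma pf_LL:
  assumes "\<And>i c. polyfun I (\<lambda>Bv. fst \<sigma> Bv i c)" "\<And>i. polyfun I (\<lambda>Bv. snd \<sigma> Bv i)"
    "\<And>i c. polyfun I (\<lambda>Bv. fst \<tau> Bv i c)" "\<And>i. polyfun I (\<lambda>Bv. snd \<tau> Bv i)"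
  shows "polyfun I (\<lambda>Bv. LL n \<sigma> \<tau> Bv c b)"
  unfolding LL_def
  by (cases "b < n"; cases "b < 2*n") (auto intro!: pf_neg pf_diff assms)

lemma LL_sum:
  fixes x y :: "nat \<Rightarrow> real"
  shows "(\<Sum>b<2*n+1. LL n \<sigma> \<tau> Bv c b * (if b < n then x b else if b < 2*n then y (b-n) else 1)) =
    ((\<Sum>b<n. fst \<sigma> Bv c b * x b) + snd \<sigma> Bv c) - ((\<Sum>b<n. fst \<tau> Bv c b * y b) + snd \<tau> Bv c)"
proof -
  let ?g = "\<lambda>b. LL n \<sigma> \<tau> Bv c b * (if b < n then x b else if b < 2*n then y (b-n) else 1)"
  have "(\<Sum>b<2*n+1. ?g b) = (\<Sum>b<n+n. ?g b) + ?g (2*n)" by (simp add: mult_2)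
  also have "(\<Sum>b<n+n. ?g b) = (\<Sum>b<n. ?g b) + (\<Sum>b<n. ?g (n + b))" by (rule sum_split_add)
  also have "(\<Sum>b<n. ?g b) = (\<Sum>b<n. fst \<sigma> Bv c b * x b)" by (intro sum.cong) (auto simp: LL_def)
  also have "(\<Sum>b<n. ?g (n + b)) = (\<Sum>b<n. - (fst \<tau> Bv c b * y b))" by (intro sum.cong) (auto simp: LL_def)
  also have "?g (2*n) = snd \<sigma> Bv c - snd \<tau> Bv c" by (simp add: LL_def)
  finally show ?thesis by (simp add: sum_negf)
qed

lemma Bidx_mono: "j \<le> j' \<Longrightarrow> Bidx d j \<subseteq> Bidx d j'"
  unfolding Bidx_def by auto

lemma Bidx_finite: "finite (Bidx d k)"
proof -
  have "Bidx d k = (\<Union>j\<in>{1..k}. {j} \<times> {..<d (2*j)} \<times> {..<d (2*j - 1)})"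
    unfolding Bidx_def by auto
  then show ?thesis by simp
qed

lemma mat_cong':
  "(\<And>a b. a < r \<Longrightarrow> b < r \<Longrightarrow> g (a,b) = g' (a,b)) \<Longrightarrow> Matrix.mat r r g = Matrix.mat r r g'"
  by (intro eq_matI) auto

lemma compF_ppa:
  assumes d0: "d 0 = n" and nets: "\<forall>j\<in>{1..k}. is_relu_net (d (2*j - 2)) (d (2*j - 1)) (f j)"
  shows "j \<le> k \<Longrightarrow> ppa (Bidx d j) n (d (2*j)) (\<lambda>Bv x. compF d f Bv j x)"
proof (induction j)
  case 0 show ?case using ppa_id[of "Bidx d 0" n] d0 by simp
next
  case (Suc j)
  have IH: "ppa (Bidx d j) n (d (2*j)) (\<lambda>Bv x. compF d f Bv j x)" using Suc by simp
  have "is_relu_net (d (2*Suc j - 2)) (d (2*Suc j - 1)) (f (Suc j))"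
    using bspec[OF nets, of "Suc j"] Suc(2) by simp
  then have net: "is_relu_net (d (2*j)) (d (2*j+1)) (f (Suc j))" by simp
  have G: "ppa (Bidx d j) n (d (2*j+1)) (\<lambda>Bv x. f (Suc j) (compF d f Bv j x))"
    by (rule ppa_net[OF net IH])
  have G': "ppa (Bidx d (Suc j)) n (d (2*j+1)) (\<lambda>Bv x. f (Suc j) (compF d f Bv j x))"
    by (rule ppa_mono[OF G Bidx_mono]) simp
  have H: "ppa (Bidx d (Suc j)) n (d (2*j+2)) (\<lambda>Bv x. (\<lambda>i. lin (d (2*j+1)) (d (2*j+2)) ((\<lambda>Bv r c. Bv (Suc j, r, c)) Bv) (f (Suc j) (compF d f Bv j x)) i + (if i < d (2*j+2) then (\<lambda>_ _. 0) Bv i else 0)))"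
    by (rule ppa_lin[OF G']) (auto simp: Bidx_def intro: pf_var pf_const)
  have eq: "d (2 * Suc j) = d (2*j+2)" by simp
  show ?case unfolding eq by (rule ppa_cong[OF H]) simp
qed

theorem corollary2:
  fixes n m k :: nat
    and d :: "nat \<Rightarrow> nat"
    and f :: "nat \<Rightarrow> (nat \<Rightarrow> real) \<Rightarrow> (nat \<Rightarrow> real)"
    and M :: "'w measure"
    and B :: "'w \<Rightarrow> (nat \<times> nat \<times> nat \<Rightarrow> real)"
  assumes dpos: "\<forall>j\<le>2*k. d j > 0"
    and d0: "d 0 = n"
    and d2k: "d (2*k) = m"
    and m_ge: "m \<ge> 2*n + 1"
    and d_even: "\<forall>j\<le>2*k. even j \<and> j \<ge> 2 \<longrightarrow> d j \<ge> 2*n + 1"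
    and nets: "\<forall>j\<in>{1..k}. is_relu_net (d (2*j - 2)) (d (2*j - 1)) (f j)"
    and inj: "\<forall>j\<in>{1..k}. inj_on (f j) (vecs (d (2*j - 2)))"
    and P: "prob_space M"
    and Bmeas: "B \<in> measurable M (PiM (Bidx d k) (\<lambda>_. lborel))"
    and Bac: "absolutely_continuous (PiM (Bidx d k) (\<lambda>_. lborel))
                (distr M (PiM (Bidx d k) (\<lambda>_. lborel)) B)"
  shows "AE \<omega> in M. inj_on (compF d f (B \<omega>) k) (vecs n)"
proof -
  define I where "I = Bidx d k"
  define N where "N = PiM I (\<lambda>_. lborel :: real measure)"
  have finI: "finite I" unfolding I_def by (rule Bidx_finite)
  define G where "G = (\<lambda>j0 Bv x. f (Suc j0) (compF d f Bv j0 x))"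
  have CF: "ppa (Bidx d j) n (d (2*j)) (\<lambda>Bv x. compF d f Bv j x)" if "j \<le> k" for j
    using compF_ppa[OF d0 nets that] .
  have Gp: "ppa (Bidx d j0) n (d (2*j0+1)) (G j0)" if j0: "j0 < k" for j0
  proof -
    have "is_relu_net (d (2*Suc j0 - 2)) (d (2*Suc j0 - 1)) (f (Suc j0))"
      using bspec[OF nets, of "Suc j0"] j0 by simp
    then have net: "is_relu_net (d (2*j0)) (d (2*j0+1)) (f (Suc j0))" by simp
    show ?thesis unfolding G_def using ppa_net[OF net CF] j0 by simp
  qed
  define Pr where "Pr = (\<lambda>j0 S. finite S \<and>
     (\<forall>(A,b)\<in>S. (\<forall>i c. polyfun (Bidx d j0) (\<lambda>Bv. A Bv i c)) \<and> (\<forall>i. polyfun (Bidx d j0) (\<lambda>Bv. b Bv i))) \<and>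
     (\<forall>Bv x. x \<in> vecs n \<longrightarrow> (\<exists>(A,b)\<in>S. G j0 Bv x = (\<lambda>i. (\<Sum>c<n. A Bv i c * x c) + b Bv i))))"
  have ex: "\<exists>S. j0 < k \<longrightarrow> Pr j0 S" for j0
  proof (cases "j0 < k")
    case True
    have "\<exists>S. Pr j0 S" using Gp[OF True] unfolding ppa_def Pr_def by (rule conjunct2)
    then obtain S where "Pr j0 S" by (elim exE)
    then show ?thesis by (intro exI[of _ S] impI)
  next
    case False then show ?thesis by simp
  qed
  then have all: "\<forall>j0. \<exists>S. j0 < k \<longrightarrow> Pr j0 S" by (intro allI)
  obtain Sf where Sf': "\<forall>j0. j0 < k \<longrightarrow> Pr j0 (Sf j0)"
    using choice[OF all] by (elim exE) (rule that)
  have Sf: "finite (Sf j0) \<and>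
     (\<forall>(A,b)\<in>Sf j0. (\<forall>i c. polyfun (Bidx d j0) (\<lambda>Bv. A Bv i c)) \<and> (\<forall>i. polyfun (Bidx d j0) (\<lambda>Bv. b Bv i))) \<and>
     (\<forall>Bv x. x \<in> vecs n \<longrightarrow> (\<exists>(A,b)\<in>Sf j0. G j0 Bv x = (\<lambda>i. (\<Sum>c<n. A Bv i c * x c) + b Bv i)))" if "j0 < k" for j0
    using Sf' that unfolding Pr_def by blast
  define Cs where "Cs = {C. distinct C \<and> set C \<subseteq> {..<2*n+1}}"
  have lenC: "length C \<le> 2*n+1" if "C \<in> Cs" for C
  proof -
    have "length C = card (set C)" "set C \<subseteq> {..<2*n+1}"
      using that unfolding Cs_def by (auto simp: distinct_card)
    then show ?thesis using card_mono[of "{..<2*n+1}" "set C"] by simp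
  qed
  have finCs: "finite Cs"
  proof (rule finite_subset)
    show "Cs \<subseteq> {xs. set xs \<subseteq> {..<2*n+1} \<and> length xs \<le> 2*n+1}" using lenC unfolding Cs_def by auto
  qed (rule finite_lists_length_le, simp)
  define PP where "PP = (\<lambda>j0 \<sigma> \<tau> C (Bv :: nat \<times> nat \<times> nat \<Rightarrow> real).
     Determinant.det (gram (d (2*j0+1)) (LL n \<sigma> \<tau> Bv) C) *
     Determinant.det (Matrix.mat (length C) (length C) (\<lambda>(a,b). \<Sum>c<d (2*j0+1). Bv (Suc j0, a, c) * LL n \<sigma> \<tau> Bv c (C!b))))"
  define T where "T = {(j0,\<sigma>,\<tau>,C). j0 < k \<and> \<sigma> \<in> Sf j0 \<and> \<tau> \<in> Sf j0 \<and> C \<in> Cs}"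
  define Zs where "Zs = (\<lambda>(j0,\<sigma>,\<tau>,C). {Bv \<in> space N. PP j0 \<sigma> \<tau> C Bv = 0 \<and> (\<exists>Bv0. PP j0 \<sigma> \<tau> C Bv0 \<noteq> 0)})"
  define Z where "Z = (\<Union>t\<in>T. Zs t)"
  have finT: "finite T"
  proof (rule finite_subset)
    show "T \<subseteq> {..<k} \<times> (\<Union>j\<in>{..<k}. Sf j) \<times> (\<Union>j\<in>{..<k}. Sf j) \<times> Cs" unfolding T_def by auto
    show "finite ({..<k} \<times> (\<Union>j\<in>{..<k}. Sf j) \<times> (\<Union>j\<in>{..<k}. Sf j) \<times> Cs)"
      using Sf finCs by auto
  qed
  have LLpf: "polyfun (Bidx d j0) (\<lambda>Bv. LL n \<sigma> \<tau> Bv c b)" if "j0 < k" "\<sigma> \<in> Sf j0" "\<tau> \<in> Sf j0" for j0 \<sigma> \<tau> c b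
  proof -
    obtain A1 b1 where s: "\<sigma> = (A1, b1)" by (cases \<sigma>)
    obtain A2 b2 where t: "\<tau> = (A2, b2)" by (cases \<tau>)
    have "\<And>i c. polyfun (Bidx d j0) (\<lambda>Bv. A1 Bv i c)" "\<And>i. polyfun (Bidx d j0) (\<lambda>Bv. b1 Bv i)"
      "\<And>i c. polyfun (Bidx d j0) (\<lambda>Bv. A2 Bv i c)" "\<And>i. polyfun (Bidx d j0) (\<lambda>Bv. b2 Bv i)"
      using Sf[OF that(1)] that(2,3) unfolding s t by fastforce+
    then show ?thesis unfolding s t by (intro pf_LL) auto
  qed
  have PPpf: "polyfun I (PP j0 \<sigma> \<tau> C)" if t: "(j0,\<sigma>,\<tau>,C) \<in> T" for j0 \<sigma> \<tau> C
  proof -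
    have t': "j0 < k" "\<sigma> \<in> Sf j0" "\<tau> \<in> Sf j0" "C \<in> Cs" using t unfolding T_def by auto
    have sub: "Bidx d j0 \<subseteq> I" unfolding I_def using t'(1) by (intro Bidx_mono) simp
    have L: "polyfun I (\<lambda>Bv. LL n \<sigma> \<tau> Bv c b)" for c b
      using pf_mono[OF LLpf[OF t'(1-3)] sub] .
    have dq: "2*n+1 \<le> d (2 * Suc j0)" using d_even t'(1) by auto
    have idx: "(Suc j0, a, c) \<in> I" if "a < length C" "c < d (2*j0+1)" for a c
      using that lenC[OF t'(4)] dq t'(1) unfolding I_def Bidx_def by auto
    show ?thesis unfolding PP_def
      by (intro pf_mult pf_gram L pf_det pf_sum pf_var) (use idx in auto)
  qed
  have Znull: "Z \<in> null_sets N"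
    unfolding Z_def
  proof (rule null_sets_UN')
    show "countable T" using finT by (rule countable_finite)
  next
    fix t assume t: "t \<in> T"
    obtain j0 \<sigma> \<tau> C where tt: "t = (j0,\<sigma>,\<tau>,C)" by (cases t) auto
    show "Zs t \<in> null_sets N"
    proof (cases "\<exists>Bv0. PP j0 \<sigma> \<tau> C Bv0 \<noteq> 0")
      case True
      then obtain Bv0 where "PP j0 \<sigma> \<tau> C Bv0 \<noteq> 0" by blast
      from pf_null[OF finI PPpf[OF t[unfolded tt]] this]
      show ?thesis unfolding tt Zs_def N_def using True by simp
    next
      case False
      then have "Zs t = {}" unfolding tt Zs_def by simp
      then show ?thesis by (metis null_sets.empty_sets)
    qed
  qed
  have main: "Bv \<in> Z" if Bv: "Bv \<in> space N" and ninj: "\<not> inj_on (compF d f Bv k) (vecs n)" for Bv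
  proof -
    have "inj_on (compF d f Bv 0) (vecs n)" by (simp add: inj_on_def)
    from first_fail[of "\<lambda>j. inj_on (compF d f Bv j) (vecs n)", OF this ninj]
    obtain j0 where j0: "j0 < k" "inj_on (compF d f Bv j0) (vecs n)" "\<not> inj_on (compF d f Bv (Suc j0)) (vecs n)"
      by blast
    then obtain x y where xy: "x \<in> vecs n" "y \<in> vecs n" "x \<noteq> y" "compF d f Bv (Suc j0) x = compF d f Bv (Suc j0) y"
      unfolding inj_on_def by blast
    define p where "p = d (2*j0+1)"
    define q where "q = d (2*j0+2)"
    have CFj: "compF d f Bv j0 z \<in> vecs (d (2*j0))" if "z \<in> vecs n" for z
      using CF[of j0] j0(1) that unfolding ppa_def by auto
    have injf: "inj_on (f (Suc j0)) (vecs (d (2*j0)))"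
      using bspec[OF inj, of "Suc j0"] j0(1) by simp
    have "compF d f Bv j0 x \<noteq> compF d f Bv j0 y" using j0(2) xy unfolding inj_on_def by blast
    then have Gne: "G j0 Bv x \<noteq> G j0 Bv y"
      unfolding G_def using injf CFj[OF xy(1)] CFj[OF xy(2)] unfolding inj_on_def by blast
    have GV: "G j0 Bv z \<in> vecs p" if "z \<in> vecs n" for z
      using Gp[OF j0(1)] that unfolding ppa_def p_def by auto
    obtain c0 where c0: "c0 < p" "G j0 Bv x c0 \<noteq> G j0 Bv y c0"
    proof (rule ccontr)
      assume "\<not> thesis"
      then have "\<forall>c<p. G j0 Bv x c = G j0 Bv y c" using that by blast
      moreover have "\<forall>c\<ge>p. G j0 Bv x c = G j0 Bv y c" using GV[OF xy(1)] GV[OF xy(2)] unfolding vecs_def by auto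
      ultimately have "G j0 Bv x = G j0 Bv y" by (intro ext) (metis not_le)
      then show False using Gne by simp
    qed
    obtain A1 b1 where s: "(A1,b1) \<in> Sf j0" "G j0 Bv x = (\<lambda>i. (\<Sum>c<n. A1 Bv i c * x c) + b1 Bv i)"
      using Sf[OF j0(1)] xy(1) by blast
    obtain A2 b2 where t: "(A2,b2) \<in> Sf j0" "G j0 Bv y = (\<lambda>i. (\<Sum>c<n. A2 Bv i c * y c) + b2 Bv i)"
      using Sf[OF j0(1)] xy(2) by blast
    define \<sigma> where "\<sigma> = (A1,b1)"
    define \<tau> where "\<tau> = (A2,b2)"
    define w where "w = (\<lambda>b. if b < n then x b else if b < 2*n then y (b-n) else 1)"
    have Lw: "(\<Sum>b<2*n+1. LL n \<sigma> \<tau> Bv c b * w b) = G j0 Bv x c - G j0 Bv y c" for c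
      unfolding w_def LL_sum \<sigma>_def \<tau>_def using s(2) t(2) by simp
    have ker: "\<forall>a<q. (\<Sum>c<p. Bv (Suc j0, a, c) * (\<Sum>b<2*n+1. LL n \<sigma> \<tau> Bv c b * w b)) = 0"
    proof (intro allI impI)
      fix a assume a: "a < q"
      have "compF d f Bv (Suc j0) x a = (\<Sum>c<p. Bv (Suc j0, a, c) * G j0 Bv x c)"
        using a by (simp add: lin_def p_def q_def G_def)
      moreover have "compF d f Bv (Suc j0) y a = (\<Sum>c<p. Bv (Suc j0, a, c) * G j0 Bv y c)"
        using a by (simp add: lin_def p_def q_def G_def)
      ultimately have "(\<Sum>c<p. Bv (Suc j0, a, c) * G j0 Bv x c) - (\<Sum>c<p. Bv (Suc j0, a, c) * G j0 Bv y c) = 0"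
        using xy(4) by simp
      then show "(\<Sum>c<p. Bv (Suc j0, a, c) * (\<Sum>b<2*n+1. LL n \<sigma> \<tau> Bv c b * w b)) = 0"
        unfolding Lw by (simp add: right_diff_distrib sum_subtractf)
    qed
    have sq: "2*n+1 \<le> q" unfolding q_def using d_even j0(1) by auto
    have nz: "(\<Sum>b<2*n+1. LL n \<sigma> \<tau> Bv c0 b * w b) \<noteq> 0" unfolding Lw using c0(2) by simp
    obtain C where C: "distinct C" "set C \<subseteq> {..<2*n+1}" "IND p (LL n \<sigma> \<tau> Bv) C"
      "Determinant.det (Matrix.mat (length C) (length C) (\<lambda>(a,b). \<Sum>c<p. Bv (Suc j0, a, c) * LL n \<sigma> \<tau> Bv c (C!b))) = 0"
      using core[OF sq c0(1) nz ker] by blast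
    have CCs: "C \<in> Cs" using C unfolding Cs_def by simp
    have tT: "(j0, \<sigma>, \<tau>, C) \<in> T" unfolding T_def \<sigma>_def \<tau>_def using j0(1) s(1) t(1) CCs by simp
    have PP0: "PP j0 \<sigma> \<tau> C Bv = 0" unfolding PP_def using C(4) unfolding p_def by simp
    define Bv0 where "Bv0 = (\<lambda>(jj::nat, a::nat, c::nat). if jj = Suc j0 then (if a < length C then LL n \<sigma> \<tau> Bv c (C!a) else 0) else Bv (jj, a, c))"
    have LL0: "LL n \<sigma> \<tau> Bv0 c b = LL n \<sigma> \<tau> Bv c b" for c b
    proof (rule pf_agree[OF LLpf[OF j0(1)]])
      show "\<sigma> \<in> Sf j0" "\<tau> \<in> Sf j0" unfolding \<sigma>_def \<tau>_def using s(1) t(1) by auto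
      fix idx assume "idx \<in> Bidx d j0"
      then show "Bv0 idx = Bv idx" unfolding Bv0_def Bidx_def by auto
    qed
    have LL0': "LL n \<sigma> \<tau> Bv0 = LL n \<sigma> \<tau> Bv" by (intro ext) (rule LL0)
    have "Matrix.mat (length C) (length C) (\<lambda>(a,b). \<Sum>c<p. Bv0 (Suc j0, a, c) * LL n \<sigma> \<tau> Bv0 c (C!b)) = gram p (LL n \<sigma> \<tau> Bv) C"
      unfolding gram_def LL0 by (intro mat_cong') (simp add: Bv0_def)
    then have "PP j0 \<sigma> \<tau> C Bv0 = Determinant.det (gram p (LL n \<sigma> \<tau> Bv) C) * Determinant.det (gram p (LL n \<sigma> \<tau> Bv) C)"
      unfolding PP_def p_def by (simp add: LL0')
    then have "PP j0 \<sigma> \<tau> C Bv0 \<noteq> 0" using gram_det_nz[OF C(3)] by simp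
    then have "Bv \<in> Zs (j0, \<sigma>, \<tau>, C)" unfolding Zs_def using Bv PP0 by auto
    then show "Bv \<in> Z" unfolding Z_def using tT by blast
  qed
  have ZN: "Z \<in> sets N" using Znull by auto
  have "Z \<in> null_sets (distr M N B)" using Bac Znull unfolding absolutely_continuous_def N_def I_def by auto
  then have "emeasure (distr M N B) Z = 0" by auto
  then have E0: "emeasure M (B -` Z \<inter> space M) = 0"
    using emeasure_distr[OF Bmeas[folded I_def N_def] ZN] by simp
  have "B -` Z \<inter> space M \<in> sets M" using measurable_sets[OF Bmeas[folded I_def N_def] ZN] .
  then have null: "B -` Z \<inter> space M \<in> null_sets M" using E0 by auto
  show ?thesis
  proof (rule AE_I'[OF null], rule subsetI)
    fix \<omega> assume "\<omega> \<in> {\<omega> \<in> space M. \<not> inj_on (compF d f (B \<omega>) k) (vecs n)}"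
    then have om: "\<omega> \<in> space M" and ni: "\<not> inj_on (compF d f (B \<omega>) k) (vecs n)" by auto
    have "B \<omega> \<in> space N" using measurable_space[OF Bmeas[folded I_def N_def] om] .
    then have "B \<omega> \<in> Z" using main ni by blast
    then show "\<omega> \<in> B -` Z \<inter> space M" using om by simp
  qed
qed

end
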